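(* Let $N\geq1$ and $0\leq m<2$. Let $a\in C(\mathbb{R}^N)\cap L^\infty(\mathbb{R}^N)$ with $a^+=\max\{0,a\}\not\equiv0$ and $\limsup_{|x|\to\infty}a(x)<0$. Let $J\in L^1(\mathbb{R}^N)$ be nonnegative and radially symmetric, with $\int_{\mathbb{R}^N}J=1$ and $\int_{\mathbb{R}^N}J(x)|x|^m\,\mathrm{d}x<\infty$; set $J_\varepsilon(z)=\varepsilon^{-N}J(z/\varepsilon)$. Then for all $\theta\in(0,1)$ and all $z\in\mathrm{supp}(a^+)$ there exist a neighborhood $V_{z,\theta}\subset\mathrm{supp}(a^+)$ of $z$, a number $\varepsilon_{z,\theta}>0$ and a nonnegative function $\underline{u}^{z,\theta}\in C_c(\mathbb{R}^N)$ such that $$\mathrm{supp}(\underline{u}^{z,\theta})=V_{z,\theta},\quad \underline{u}^{z,\theta}(z)\geq(1-\theta)a^+(z),\quad \underline{u}^{z,\theta}(x)<a^+(x)\ \text{for all }x\in V_{z,\theta},$$ and, for all $0<\varepsilon<\varepsilon_{z,\theta}$, $$\frac{1}{\varepsilon^m}\big(J_\varepsilon\ast\underline{u}^{z,\theta}-\underline{u}^{z,\theta}\big)+\underline{u}^{z,\theta}(a-\underline{u}^{z,\theta})\geq0\quad\text{in }\mathbb{R}^N.$$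
   Context: $(J_\varepsilon\ast u)(x)=\int_{\mathbb{R}^N}J_\varepsilon(x-y)u(y)\,\mathrm{d}y$. For a function $f$, $\mathrm{supp}(f)=\{x\in\mathbb{R}^N: f(x)\neq0\}$ denotes the set-theoretic support (not its closure). *)

theory Defs
  imports "HOL-Analysis.Analysis"
begin

definition rescale_kernel :: "('a::euclidean_space \<Rightarrow> real) \<Rightarrow> real \<Rightarrow> 'a \<Rightarrow> real" where
  "rescale_kernel J eps z = (1 / eps ^ DIM('a)) * J ((1 / eps) *\<^sub>R z)"

definition conv :: "('a::euclidean_space \<Rightarrow> real) \<Rightarrow> ('a \<Rightarrow> real) \<Rightarrow> 'a \<Rightarrow> real" where
  "conv K u x = (\<integral>y. K (x - y) * u y \<partial>lebesgue)"

text \<open>Set-theoretic support (not its closure).\<close>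
definition supp :: "('a \<Rightarrow> real) \<Rightarrow> 'a set" where
  "supp f = {x. f x \<noteq> 0}"

definition pos_part :: "('a \<Rightarrow> real) \<Rightarrow> 'a \<Rightarrow> real" where
  "pos_part f x = max 0 (f x)"

definition Cc :: "('a::euclidean_space \<Rightarrow> real) \<Rightarrow> bool" where
  "Cc f \<longleftrightarrow> continuous_on UNIV f \<and> compact (closure (supp f))"

end

theory Submission
  imports Defs "HOL-Library.FuncSet"
begin

definition phi :: "real \<Rightarrow> real \<Rightarrow> real" where
  "phi r t = (max 0 (r^2 - t^2))^2"

lemma phi_nonneg: "phi r t \<ge> 0" by (simp add: phi_def)

lemma phi_even: "phi r (-t) = phi r t" by (simp add: phi_def)

lemma phi_inside: "\<bar>t\<bar> < r \<Longrightarrow> phi r t = (r^2 - t^2)^2"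
proof -
  assume "\<bar>t\<bar> < r"
  then have "\<bar>t\<bar>^2 < r^2" by (intro power_strict_mono) auto
  then have "t^2 < r^2" by simp
  then show ?thesis by (simp add: phi_def)
qed

lemma phi_outside: "r \<ge> 0 \<Longrightarrow> \<bar>t\<bar> \<ge> r \<Longrightarrow> phi r t = 0"
proof -
  assume "r \<ge> 0" "\<bar>t\<bar> \<ge> r"
  then have "r^2 \<le> t^2" by (metis abs_le_square_iff abs_of_nonneg)
  then show ?thesis by (simp add: phi_def)
qed

lemma phi_identity:
  fixes r p h :: real shows "(r^2 - (p+h)^2)^2 + (r^2 - (p-h)^2)^2 - 2*(r^2 - p^2)^2 = 12*p^2*h^2 - 4*r^2*h^2 + 2*h^4"
  by algebra

lemma phi_pair_far:
  fixes r q h :: real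
  assumes r: "r > 0" and q1: "3*r/4 < q" and q2: "q < r" and h0: "0 \<le> h" and h1: "h < r/8"
  shows "phi r (q+h) + phi r (q-h) \<ge> 2 * phi r q"
proof -
  have in2: "\<bar>q - h\<bar> < r" using assms by auto
  have in0: "\<bar>q\<bar> < r" using assms by auto
  show ?thesis
  proof (cases "q + h < r")
    case True
    then have in1: "\<bar>q + h\<bar> < r" using assms by auto
    have "12*q^2*h^2 - 4*r^2*h^2 + 2*h^4 \<ge> 0"
    proof -
      have "q^2 \<ge> (3*r/4)^2" using q1 r by (intro power_mono) auto
      moreover have "(3*r/4)^2 = 9*r^2/16" by (simp add: power2_eq_square)
      moreover have "r^2 \<ge> 0" by simp
      ultimately have "12*q^2 \<ge> 4*r^2" by linarith
      then have "12*q^2*h^2 \<ge> 4*r^2*h^2" by (simp add: mult_right_mono)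
      moreover have "h^4 \<ge> 0" by simp
      ultimately show ?thesis by linarith
    qed
    then show ?thesis using phi_identity[of r q h] phi_inside[OF in1] phi_inside[OF in2] phi_inside[OF in0]
      by linarith
  next
    case False
    have z: "phi r (q+h) = 0" using False r h0 q1 by (intro phi_outside) auto
    define X where "X = r^2 - (q-h)^2"
    define Y where "Y = r^2 - q^2"
    have "Y = (r-q)*(r+q)" by (simp add: Y_def power2_eq_square algebra_simps)
    then have Ypos: "Y > 0" using assms by simp
    have c1: "X - Y = h*(2*q-h)" unfolding X_def Y_def by (simp add: algebra_simps power2_eq_square)
    have c2: "h*(2*q-h) \<ge> (r-q)*(2*q-h)" using False assms by (intro mult_right_mono) auto
    have c3: "(r-q)*(2*q-h) \<ge> (r-q)*((r+q)/2)" using assms by (intro mult_left_mono) auto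
    have c4: "(r-q)*((r+q)/2) = Y/2" unfolding Y_def by (simp add: algebra_simps power2_eq_square)
    have "X \<ge> 3/2 * Y" using c1 c2 c3 c4 by linarith
    then have "X^2 \<ge> (3/2*Y)^2" using Ypos by (intro power_mono) auto
    moreover have "(3/2*Y)^2 = 9/4*Y^2" by (simp add: power2_eq_square)
    moreover have "Y^2 \<ge> 0" by simp
    ultimately have "X^2 \<ge> 2*Y^2" by linarith
    then show ?thesis using z phi_inside[OF in2] phi_inside[OF in0] unfolding X_def Y_def by linarith
  qed
qed

lemma phi_sym:
  "phi r (p+h) + phi r (p-h) = phi r (\<bar>p\<bar> + \<bar>h\<bar>) + phi r (\<bar>p\<bar> - \<bar>h\<bar>)"
proof -
  have e1: "phi r (-p-h) = phi r (p+h)" using phi_even[of r "p+h"] by simp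
  have e2: "phi r (-p+h) = phi r (p-h)" using phi_even[of r "p-h"] by simp
  show ?thesis
  proof (cases "p \<ge> 0")
    case True
    then show ?thesis by (cases "h \<ge> 0") auto
  next
    case False
    then show ?thesis using e1 e2 by (cases "h \<ge> 0") auto
  qed
qed

lemma phi_pair:
  fixes r p h :: real
  assumes r: "r > 0" and p: "\<bar>p\<bar> < r"
  shows "phi r (p+h) + phi r (p-h) \<ge> 2 * phi r p * (1 - min (64/r^2 * h^2) 1)"
proof (cases "64/r^2 * h^2 \<ge> 1")
  case True
  then show ?thesis using phi_nonneg[of r] by simp
next
  case False
  then have hs: "h^2 < r^2/64" using r by (simp add: field_simps)
  have hr: "\<bar>h\<bar> < r/8"
  proof -
    have "h^2 < (r/8)^2" using hs by (simp add: power2_eq_square)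
    then show ?thesis using r by (metis abs_of_pos power2_abs power_less_imp_less_base zero_le_divide_iff less_imp_le abs_ge_zero zero_less_numeral divide_pos_pos)
  qed
  have mn: "min (64/r^2 * h^2) 1 = 64/r^2 * h^2" using False by simp
  show ?thesis
  proof (cases "\<bar>p\<bar> \<le> 3*r/4")
    case True
    have in1: "\<bar>p + h\<bar> < r" "\<bar>p - h\<bar> < r" using True hr r by auto
    have Pb: "(r^2 - p^2) \<ge> 7*r^2/16"
    proof -
      have "p^2 \<le> (3*r/4)^2" using True r by (metis abs_ge_zero power2_abs power_mono)
      then show ?thesis by (simp add: power2_eq_square)
    qed
    then have "(r^2 - p^2)^2 \<ge> (7*r^2/16)^2" using r by (intro power_mono) auto
    moreover have "(7*r^2/16)^2 = 49/256 * r^2 * r^2" by (simp add: power2_eq_square)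
    ultimately have "(r^2-p^2)^2 * 128 / r^2 \<ge> (49/256 * r^2 * r^2) * 128 / r^2"
      using r by (intro divide_right_mono mult_right_mono) auto
    also have "(49/256 * r^2 * r^2) * 128 / r^2 = 49/2 * r^2" using r by (simp add: field_simps)
    finally have P2: "(r^2-p^2)^2 * 128 / r^2 \<ge> 4 * r^2" using zero_le_power2[of r] by linarith
    have "2 * phi r p * (1 - 64/r^2 * h^2) = 2*(r^2-p^2)^2 - ((r^2-p^2)^2 * 128 / r^2) * h^2"
      using phi_inside[OF p] by (simp add: algebra_simps)
    also have "\<dots> \<le> 2*(r^2-p^2)^2 - 4*r^2*h^2"
      using mult_right_mono[OF P2, of "h^2"] by simp
    also have "\<dots> \<le> 2*(r^2-p^2)^2 + 12*p^2*h^2 - 4*r^2*h^2 + 2*h^4" by simp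
    also have "\<dots> = phi r (p+h) + phi r (p-h)"
      using phi_identity[of r p h] phi_inside[OF in1(1)] phi_inside[OF in1(2)] by linarith
    finally show ?thesis using mn by simp
  next
    case far: False
    have "phi r (p+h) + phi r (p-h) \<ge> 2 * phi r p"
    proof -
      have q1: "3*r/4 < \<bar>p\<bar>" using far by simp
      have sym: "phi r (p+h) + phi r (p-h) = phi r (\<bar>p\<bar> + \<bar>h\<bar>) + phi r (\<bar>p\<bar> - \<bar>h\<bar>)"
        by (rule phi_sym)
      have "phi r \<bar>p\<bar> = phi r p" by (cases "p \<ge> 0") (auto simp: phi_even)
      then show ?thesis using sym phi_pair_far[OF r q1 _ _ hr] p by simp
    qed
    moreover have "2 * phi r p * (1 - min (64/r^2 * h^2) 1) \<le> 2 * phi r p"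
      using phi_nonneg[of r p] by (simp add: mult_left_le)
    ultimately show ?thesis by linarith
  qed
qed

lemma borel_to_lebesgue:
  fixes f :: "'a::euclidean_space \<Rightarrow> real"
  shows "f \<in> borel_measurable borel \<Longrightarrow> f \<in> borel_measurable lebesgue"
  by (intro measurable_completion) simp

lemma sum_basis_scale:
  fixes y :: "'a::euclidean_space"
  shows "(\<Sum>j\<in>Basis. (c * (y \<bullet> j)) *\<^sub>R j) = c *\<^sub>R y"
proof -
  have "(\<Sum>j\<in>Basis. (c * (y \<bullet> j)) *\<^sub>R j) = c *\<^sub>R (\<Sum>j\<in>Basis. (y \<bullet> j) *\<^sub>R j)"
    by (simp add: scaleR_sum_right)
  also have "\<dots> = c *\<^sub>R y" by (simp add: euclidean_representation)
  finally show ?thesis .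
qed

definition flip :: "('a::euclidean_space \<Rightarrow> real) \<Rightarrow> 'a \<Rightarrow> 'a" where
  "flip \<sigma> w = (\<Sum>j\<in>Basis. (\<sigma> j * (w \<bullet> j)) *\<^sub>R j)"

lemma flip_inner: "b \<in> Basis \<Longrightarrow> flip \<sigma> w \<bullet> b = \<sigma> b * (w \<bullet> b)"
  unfolding flip_def by (simp add: inner_sum_left inner_Basis if_distrib cong: if_cong)

lemma norm_flip:
  assumes "\<And>j. j \<in> Basis \<Longrightarrow> \<bar>\<sigma> j\<bar> = 1"
  shows "norm (flip \<sigma> w) = norm w"
proof -
  have "flip \<sigma> w \<bullet> flip \<sigma> w = w \<bullet> w"
  proof -
    have "flip \<sigma> w \<bullet> flip \<sigma> w = (\<Sum>b\<in>Basis. (flip \<sigma> w \<bullet> b) * (flip \<sigma> w \<bullet> b))"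
      by (rule euclidean_inner)
    also have "\<dots> = (\<Sum>b\<in>Basis. (w \<bullet> b) * (w \<bullet> b))"
    proof (rule sum.cong)
      fix b :: 'a assume b: "b \<in> Basis"
      have "\<sigma> b * \<sigma> b = 1" using assms[OF b] by (metis abs_mult_self_eq mult_1_right abs_1)
      then show "(flip \<sigma> w \<bullet> b) * (flip \<sigma> w \<bullet> b) = (w \<bullet> b) * (w \<bullet> b)"
        using flip_inner[OF b] by (metis mult.left_commute mult.assoc mult_1_left)
    qed simp
    also have "\<dots> = w \<bullet> w" by (rule euclidean_inner[symmetric])
    finally show ?thesis .
  qed
  then show ?thesis by (simp add: norm_eq_sqrt_inner)
qed

lemma integral_affine_lebesgue:
  fixes f :: "'a::euclidean_space \<Rightarrow> real" and c :: "'a \<Rightarrow> real"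
  assumes c: "\<And>j. j \<in> Basis \<Longrightarrow> c j \<noteq> 0" and f: "f \<in> borel_measurable lebesgue"
  shows "(\<integral>x. f x \<partial>lebesgue) = (\<Prod>j\<in>Basis. \<bar>c j\<bar>) * (\<integral>x. f (t + (\<Sum>j\<in>Basis. (c j * (x \<bullet> j)) *\<^sub>R j)) \<partial>lebesgue)"
proof -
  define T where "T = (\<lambda>x::'a. t + (\<Sum>j\<in>Basis. (c j * (x \<bullet> j)) *\<^sub>R j))"
  have T: "T \<in> lebesgue \<rightarrow>\<^sub>M lebesgue" unfolding T_def by (rule lebesgue_affine_measurable[OF c])
  have eq: "lebesgue = density (distr lebesgue lebesgue T) (\<lambda>_. ennreal (\<Prod>j\<in>Basis. \<bar>c j\<bar>))"
    unfolding T_def by (rule lebesgue_affine_euclidean[OF c])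
  have "(\<integral>x. f x \<partial>lebesgue) = (\<integral>x. f x \<partial>density (distr lebesgue lebesgue T) (\<lambda>_. ennreal (\<Prod>j\<in>Basis. \<bar>c j\<bar>)))"
    by (rule arg_cong[where f="\<lambda>M. integral\<^sup>L M f", OF eq])
  also have "\<dots> = (\<integral>x. (\<Prod>j\<in>Basis. \<bar>c j\<bar>) *\<^sub>R f x \<partial>distr lebesgue lebesgue T)"
    by (rule integral_density) (auto simp: f prod_nonneg)
  also have "\<dots> = (\<integral>x. (\<Prod>j\<in>Basis. \<bar>c j\<bar>) *\<^sub>R f (T x) \<partial>lebesgue)"
    by (rule integral_distr[OF T]) (rule borel_measurable_scaleR[OF borel_measurable_const f])
  also have "\<dots> = (\<Prod>j\<in>Basis. \<bar>c j\<bar>) * (\<integral>x. f (T x) \<partial>lebesgue)"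
    by simp
  finally show ?thesis unfolding T_def .
qed

lemma flip_measurable:
  assumes "\<And>j. j \<in> Basis \<Longrightarrow> \<bar>\<sigma> j\<bar> = 1"
  shows "(flip \<sigma> :: 'a::euclidean_space \<Rightarrow> 'a) \<in> lebesgue \<rightarrow>\<^sub>M lebesgue"
proof -
  have c: "\<And>j. j \<in> (Basis::'a set) \<Longrightarrow> \<sigma> j \<noteq> 0" using assms by force
  have "flip \<sigma> = (\<lambda>x::'a. 0 + (\<Sum>j\<in>Basis. (\<sigma> j * (x \<bullet> j)) *\<^sub>R j))" by (simp add: flip_def fun_eq_iff)
  then show ?thesis using lebesgue_affine_measurable[OF c, where t=0] by simp
qed

lemma integral_flip:
  fixes g :: "'a::euclidean_space \<Rightarrow> real"
  assumes s: "\<And>j. j \<in> Basis \<Longrightarrow> \<bar>\<sigma> j\<bar> = 1" and g: "g \<in> borel_measurable lebesgue"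
  shows "(\<integral>x. g x \<partial>lebesgue) = (\<integral>x. g (flip \<sigma> x) \<partial>lebesgue)"
proof -
  have c: "\<And>j. j \<in> (Basis::'a set) \<Longrightarrow> \<sigma> j \<noteq> 0" using s by force
  have "(\<integral>x. g x \<partial>lebesgue) = (\<Prod>j\<in>Basis. \<bar>\<sigma> j\<bar>) * (\<integral>x. g (0 + (\<Sum>j\<in>Basis. (\<sigma> j * (x \<bullet> j)) *\<^sub>R j)) \<partial>lebesgue)"
    by (rule integral_affine_lebesgue[OF c g])
  also have "(\<Prod>j\<in>(Basis::'a set). \<bar>\<sigma> j\<bar>) = 1" using s by simp
  finally show ?thesis by (simp add: flip_def)
qed

lemma rescale_measurable:
  fixes J :: "'a::euclidean_space \<Rightarrow> real"
  assumes J: "J \<in> borel_measurable lebesgue" and eps: "eps > 0"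
  shows "(\<lambda>y. rescale_kernel J eps (x - y)) \<in> borel_measurable lebesgue"
proof -
  have c: "\<And>j. j \<in> (Basis::'a set) \<Longrightarrow> (\<lambda>_. -1/eps) j \<noteq> 0" using eps by simp
  have T: "(\<lambda>y::'a. (1/eps) *\<^sub>R x + (\<Sum>j\<in>Basis. ((-1/eps) * (y \<bullet> j)) *\<^sub>R j)) \<in> lebesgue \<rightarrow>\<^sub>M lebesgue"
    using lebesgue_affine_measurable[OF c, where t="(1/eps) *\<^sub>R x"] by simp
  have eq: "(\<lambda>y::'a. (1/eps) *\<^sub>R x + (\<Sum>j\<in>Basis. ((-1/eps) * (y \<bullet> j)) *\<^sub>R j)) = (\<lambda>y. (1/eps) *\<^sub>R (x - y))"
    unfolding sum_basis_scale by (simp add: fun_eq_iff scaleR_diff_right)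
  have "(\<lambda>y. J ((1/eps) *\<^sub>R (x - y))) \<in> borel_measurable lebesgue"
    using measurable_compose[OF T[unfolded eq] J] by simp
  then show ?thesis unfolding rescale_kernel_def by (rule borel_measurable_times[OF borel_measurable_const])
qed

lemma conv_rescale:
  fixes J u :: "'a::euclidean_space \<Rightarrow> real"
  assumes J: "J \<in> borel_measurable lebesgue" and u: "u \<in> borel_measurable lebesgue" and eps: "eps > 0"
  shows "conv (rescale_kernel J eps) u x = (\<integral>w. J w * u (x - eps *\<^sub>R w) \<partial>lebesgue)"
proof -
  have c: "\<And>j. j \<in> (Basis::'a set) \<Longrightarrow> (\<lambda>_. -eps) j \<noteq> 0" using eps by simp
  have F: "(\<lambda>y. rescale_kernel J eps (x - y) * u y) \<in> borel_measurable lebesgue"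
    using rescale_measurable[OF J eps] u by (rule borel_measurable_times)
  have "conv (rescale_kernel J eps) u x = (\<integral>y. rescale_kernel J eps (x - y) * u y \<partial>lebesgue)"
    by (simp add: conv_def)
  also have "\<dots> = (\<Prod>j\<in>(Basis::'a set). \<bar>-eps\<bar>) * (\<integral>w. rescale_kernel J eps (x - (x + (\<Sum>j\<in>Basis. (-eps * (w \<bullet> j)) *\<^sub>R j))) * u (x + (\<Sum>j\<in>Basis. (-eps * (w \<bullet> j)) *\<^sub>R j)) \<partial>lebesgue)"
    by (rule integral_affine_lebesgue[OF c F])
  also have "\<dots> = eps ^ DIM('a) * (\<integral>w. (1 / eps ^ DIM('a)) * (J w * u (x - eps *\<^sub>R w)) \<partial>lebesgue)"
    unfolding sum_basis_scale using eps by (simp add: rescale_kernel_def)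
  also have "\<dots> = (\<integral>w. J w * u (x - eps *\<^sub>R w) \<partial>lebesgue)"
    using eps by simp
  finally show ?thesis .
qed

lemma min_bound_moment:
  fixes n t m :: real
  assumes m: "0 \<le> m" "m < 2" and n: "n \<ge> 0" and t: "t > 0"
  shows "min (n^2 * t powr (m-2)) (t powr m) \<le> n powr m"
proof (cases "n = 0")
  case True
  then show ?thesis by (simp add: min_def)
next
  case False
  then have n0: "n > 0" using n by simp
  show ?thesis
  proof (cases "t \<le> n")
    case True
    then have "t powr m \<le> n powr m" using t m by (intro powr_mono2) auto
    then show ?thesis by simp
  next
    case False
    then have "t powr (m-2) \<le> n powr (m-2)" using n0 m by (intro powr_mono2') auto
    then have "n^2 * t powr (m-2) \<le> n^2 * n powr (m-2)" by (simp add: mult_left_mono)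
    also have "n^2 * n powr (m-2) = n powr m"
    proof -
      have "n powr m = n powr (2 + (m-2))" by simp
      also have "\<dots> = n powr 2 * n powr (m-2)" by (rule powr_add)
      also have "n powr 2 = n^2" using n0 by (simp add: powr_numeral)
      finally show ?thesis by simp
    qed
    finally show ?thesis by simp
  qed
qed

lemma small_moment:
  fixes J :: "'a::euclidean_space \<Rightarrow> real"
  assumes m: "0 \<le> m" "m < 2" and Jm: "J \<in> borel_measurable lebesgue" and Jn: "\<And>x. J x \<ge> 0"
    and mom: "integrable lebesgue (\<lambda>x. J x * norm x powr m)" and eta: "\<eta> > 0"
  shows "\<exists>e0>0. \<forall>eps. 0 < eps \<and> eps < e0 \<longrightarrow>
           (\<integral>w. J w * min (eps^2 * (norm w)^2) 1 \<partial>lebesgue) \<le> \<eta> * eps powr m"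
proof -
  define s where "s t w = J w * min (norm w ^2 * t powr (m-2)) (t powr m)" for t :: real and w :: 'a
  have sm: "s t \<in> borel_measurable lebesgue" for t
  proof -
    have "(\<lambda>w::'a. min (norm w ^2 * t powr (m-2)) (t powr m)) \<in> borel_measurable borel"
      by (intro borel_measurable_continuous_onI continuous_intros)
    then have "(\<lambda>w::'a. min (norm w ^2 * t powr (m-2)) (t powr m)) \<in> borel_measurable lebesgue"
      by (intro measurable_completion) simp
    then show ?thesis unfolding s_def using Jm by (intro borel_measurable_times)
  qed
  have lim: "((\<lambda>t. \<integral>w. s t w \<partial>lebesgue) \<longlongrightarrow> (\<integral>w. 0 \<partial>(lebesgue::'a measure))) at_top"
  proof (rule integral_dominated_convergence_at_top[where w="\<lambda>x. J x * norm x powr m" and s=s and f="\<lambda>w. 0" and M=lebesgue])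
    show "(\<lambda>w. 0::real) \<in> borel_measurable lebesgue" by simp
    show "\<And>t. s t \<in> borel_measurable lebesgue" by (rule sm)
    show "integrable lebesgue (\<lambda>x. J x * norm x powr m)" by (rule mom)
    show "AE w in lebesgue. ((\<lambda>t. s t w) \<longlongrightarrow> 0) at_top"
    proof (rule AE_I2)
      fix w :: 'a
      have p: "((\<lambda>t::real. t powr (m-2)) \<longlongrightarrow> 0) at_top"
        using m by (intro tendsto_neg_powr filterlim_ident) auto
      have up: "((\<lambda>t::real. J w * (norm w ^2 * t powr (m-2))) \<longlongrightarrow> 0) at_top"
        using tendsto_mult_right_zero[OF tendsto_mult_right_zero[OF p, of "norm w ^ 2"], of "J w"] by simp
      show "((\<lambda>t. s t w) \<longlongrightarrow> 0) at_top"
      proof (rule tendsto_sandwich[OF _ _ tendsto_const up])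
        show "\<forall>\<^sub>F t in at_top. 0 \<le> s t w"
          using eventually_gt_at_top[of 0]
          by eventually_elim (auto simp: s_def Jn)
        show "\<forall>\<^sub>F t in at_top. s t w \<le> J w * (norm w ^2 * t powr (m-2))"
          by (intro always_eventually allI) (auto simp: s_def Jn intro!: mult_left_mono)
      qed
    qed
    show "\<forall>\<^sub>F t in at_top. AE w in lebesgue. norm (s t w) \<le> J w * norm w powr m"
      using eventually_gt_at_top[of 0]
    proof eventually_elim
      case (elim t)
      show ?case
      proof (rule AE_I2)
        fix w :: 'a
        have "0 \<le> s t w" using elim by (auto simp: s_def Jn)
        moreover have "s t w \<le> J w * norm w powr m"
          unfolding s_def using min_bound_moment[OF m norm_ge_zero elim, of w] Jn[of w]
          by (intro mult_left_mono) auto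
        ultimately show "norm (s t w) \<le> J w * norm w powr m" by simp
      qed
    qed
  qed
  then have "\<forall>\<^sub>F t in at_top. (\<integral>w. s t w \<partial>lebesgue) < \<eta>"
    using eta by (intro order_tendstoD(2)) auto
  then obtain T0 where T0: "\<And>t. t \<ge> T0 \<Longrightarrow> (\<integral>w. s t w \<partial>lebesgue) < \<eta>"
    by (auto simp: eventually_at_top_linorder)
  define e0 where "e0 = 1 / max T0 1"
  have e0: "e0 > 0" unfolding e0_def by simp
  show ?thesis
  proof (intro exI[of _ e0] conjI e0 allI impI)
    fix eps :: real assume eps: "0 < eps \<and> eps < e0"
    have tT: "1/eps \<ge> T0"
    proof -
      define M where "M = max T0 1"
      have M1: "M \<ge> 1" "T0 \<le> M" unfolding M_def by auto
      have "eps < 1 / M" using eps unfolding e0_def M_def by simp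
      then have "eps * M < 1" using M1 by (simp add: less_divide_eq)
      then have "M < 1/eps" using eps by (simp add: pos_less_divide_eq mult.commute)
      then show ?thesis using M1 by linarith
    qed
    have pw: "J w * min (eps^2 * (norm w)^2) 1 = eps powr m * s (1/eps) w" for w
    proof -
      have a1: "eps powr m * (1/eps) powr (m-2) = eps^2"
      proof -
        have "(1/eps) powr (m-2) = 1 / eps powr (m-2)" using eps by (simp add: powr_divide)
        then have "eps powr m * (1/eps) powr (m-2) = eps powr m / eps powr (m-2)" by simp
        also have "\<dots> = eps powr (m - (m-2))" by (rule powr_diff[symmetric])
        also have "\<dots> = eps powr 2" by simp
        also have "\<dots> = eps^2" using eps by (simp add: powr_numeral)
        finally show ?thesis .
      qed
      have a2: "eps powr m * (1/eps) powr m = 1"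
        using eps by (simp add: powr_divide)
      have "eps powr m * min (norm w ^2 * (1/eps) powr (m-2)) ((1/eps) powr m)
            = min (eps powr m * (norm w ^2 * (1/eps) powr (m-2))) (eps powr m * (1/eps) powr m)"
        using eps by (simp add: min_def mult_left_mono)
      also have "\<dots> = min (eps^2 * (norm w)^2) 1"
      proof -
        have h: "eps powr m * (norm w ^2 * (1/eps) powr (m-2)) = eps^2 * (norm w)^2"
          using a1 by (metis mult.commute mult.left_commute)
        show ?thesis by (simp only: h a2)
      qed
      finally show ?thesis unfolding s_def by (simp add: algebra_simps)
    qed
    have "(\<integral>w. J w * min (eps^2 * (norm w)^2) 1 \<partial>lebesgue) = (\<integral>w. eps powr m * s (1/eps) w \<partial>lebesgue)"
      by (simp add: pw)
    also have "\<dots> = eps powr m * (\<integral>w. s (1/eps) w \<partial>lebesgue)" by simp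
    also have "\<dots> \<le> eps powr m * \<eta>"
      using T0[OF tT] by (intro mult_left_mono) auto
    finally show "(\<integral>w. J w * min (eps^2 * (norm w)^2) 1 \<partial>lebesgue) \<le> \<eta> * eps powr m"
      by (simp add: mult.commute)
  qed
qed

lemma prod_lower:
  fixes P g c :: "'b \<Rightarrow> real"
  assumes "finite A" and "\<And>i. i\<in>A \<Longrightarrow> P i \<ge> g i * (1 - c i)" and "\<And>i. i\<in>A \<Longrightarrow> g i \<ge> 0"
    and "\<And>i. i\<in>A \<Longrightarrow> 0 \<le> c i" and "\<And>i. i\<in>A \<Longrightarrow> c i \<le> 1"
  shows "(\<Prod>i\<in>A. P i) \<ge> (\<Prod>i\<in>A. g i) * (1 - (\<Sum>i\<in>A. c i))"
  using assms
proof (induction A rule: finite_induct)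
  case empty
  then show ?case by simp
next
  case (insert a A)
  have IH: "(\<Prod>i\<in>A. P i) \<ge> (\<Prod>i\<in>A. g i) * (1 - (\<Sum>i\<in>A. c i))"
    using insert by auto
  have Pa: "P a \<ge> g a * (1 - c a)" and ga: "g a \<ge> 0" and ca: "0 \<le> c a" "c a \<le> 1"
    using insert by auto
  have gA: "(\<Prod>i\<in>A. g i) \<ge> 0" using insert by (auto intro: prod_nonneg)
  have PA: "(\<Prod>i\<in>A. P i) \<ge> 0"
  proof -
    have "\<And>i. i \<in> A \<Longrightarrow> P i \<ge> 0"
    proof -
      fix i assume i: "i \<in> A"
      have "g i * (1 - c i) \<ge> 0" using insert.prems i by auto
      then show "P i \<ge> 0" using insert.prems(1)[of i] i by auto
    qed
    then show ?thesis by (intro prod_nonneg) auto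
  qed
  have S: "(\<Sum>i\<in>A. c i) \<ge> 0" using insert by (auto intro: sum_nonneg)
  have "(\<Prod>i\<in>insert a A. P i) = P a * (\<Prod>i\<in>A. P i)" using insert by simp
  also have "\<dots> \<ge> (g a * (1 - c a)) * (\<Prod>i\<in>A. P i)"
    using Pa PA by (intro mult_right_mono) auto
  also have "(g a * (1 - c a)) * (\<Prod>i\<in>A. P i) \<ge> (g a * (1 - c a)) * ((\<Prod>i\<in>A. g i) * (1 - (\<Sum>i\<in>A. c i)))"
    using IH ga ca by (intro mult_left_mono) auto
  also have "(g a * (1 - c a)) * ((\<Prod>i\<in>A. g i) * (1 - (\<Sum>i\<in>A. c i)))
     = (g a * (\<Prod>i\<in>A. g i)) * ((1 - c a) * (1 - (\<Sum>i\<in>A. c i)))" by (simp add: algebra_simps)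
  also have "\<dots> \<ge> (g a * (\<Prod>i\<in>A. g i)) * (1 - (c a + (\<Sum>i\<in>A. c i)))"
  proof (rule mult_left_mono)
    show "1 - (c a + (\<Sum>i\<in>A. c i)) \<le> (1 - c a) * (1 - (\<Sum>i\<in>A. c i))"
      using mult_nonneg_nonneg[OF ca(1) S] by (simp add: algebra_simps)
    show "0 \<le> g a * (\<Prod>i\<in>A. g i)" using ga gA by simp
  qed
  also have "(g a * (\<Prod>i\<in>A. g i)) * (1 - (c a + (\<Sum>i\<in>A. c i))) = (\<Prod>i\<in>insert a A. g i) * (1 - (\<Sum>i\<in>insert a A. c i))"
    using insert by simp
  finally show ?case .
qed

definition sigmas :: "('a::euclidean_space \<Rightarrow> real) set" where
  "sigmas = PiE Basis (\<lambda>_. {-1, 1})"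

lemma sigmas_finite: "finite (sigmas :: ('a::euclidean_space \<Rightarrow> real) set)"
  unfolding sigmas_def by (intro finite_PiE) auto

lemma sigmas_card: "card (sigmas :: ('a::euclidean_space \<Rightarrow> real) set) = 2 ^ DIM('a)"
  unfolding sigmas_def by (simp add: card_PiE numeral_2_eq_2)

lemma sigmas_abs: "\<sigma> \<in> sigmas \<Longrightarrow> j \<in> Basis \<Longrightarrow> \<bar>\<sigma> j\<bar> = 1"
  unfolding sigmas_def by (auto simp: PiE_def Pi_def)

lemma sum_flips_lower:
  fixes x z w :: "'a::euclidean_space"
  assumes r: "r > 0" and xV: "\<And>b. b \<in> Basis \<Longrightarrow> \<bar>(x - z) \<bullet> b\<bar> < r"
  shows "(\<Sum>\<sigma>\<in>sigmas. \<Prod>b\<in>Basis. phi r ((x - eps *\<^sub>R flip \<sigma> w - z) \<bullet> b))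
     \<ge> 2 ^ DIM('a) * (\<Prod>b\<in>Basis. phi r ((x - z) \<bullet> b)) * (1 - DIM('a) * max (64/r^2) 1 * min (eps^2 * (norm w)^2) 1)"
proof -
  define p where "p b = (x - z) \<bullet> b" for b
  define q where "q b = w \<bullet> b" for b
  define K1 where "K1 = max (64/r^2) (1::real)"
  define E where "E = min (eps^2 * (norm w)^2) (1::real)"
  define f where "f b s = phi r (p b - eps * (s * q b))" for b s
  define c where "c b = min (64/r^2 * (eps * q b)^2) 1" for b
  have inn: "(x - eps *\<^sub>R flip \<sigma> w - z) \<bullet> b = p b - eps * (\<sigma> b * q b)" if "b \<in> Basis" for \<sigma> b
    using that by (simp add: p_def q_def inner_diff_left flip_inner algebra_simps)
  have "(\<Sum>\<sigma>\<in>sigmas. \<Prod>b\<in>Basis. phi r ((x - eps *\<^sub>R flip \<sigma> w - z) \<bullet> b))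
        = (\<Sum>\<sigma>\<in>PiE Basis (\<lambda>_. {-1,1}). \<Prod>b\<in>Basis. f b (\<sigma> b))"
    unfolding sigmas_def f_def by (intro sum.cong refl prod.cong) (simp_all add: inn)
  also have "\<dots> = (\<Prod>b\<in>Basis. \<Sum>s\<in>{-1,1}. f b s)"
    by (rule prod_sum_PiE[symmetric]) auto
  also have "\<dots> = (\<Prod>b\<in>Basis. phi r (p b + eps * q b) + phi r (p b - eps * q b))"
    by (intro prod.cong refl) (simp add: f_def)
  finally have eq: "(\<Sum>\<sigma>\<in>sigmas. \<Prod>b\<in>Basis. phi r ((x - eps *\<^sub>R flip \<sigma> w - z) \<bullet> b))
        = (\<Prod>b\<in>Basis. phi r (p b + eps * q b) + phi r (p b - eps * q b))" .
  have low: "(\<Prod>b\<in>Basis. phi r (p b + eps * q b) + phi r (p b - eps * q b))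
      \<ge> (\<Prod>b\<in>Basis. 2 * phi r (p b)) * (1 - (\<Sum>b\<in>Basis. c b))"
  proof (rule prod_lower)
    fix b :: 'a assume b: "b \<in> Basis"
    show "phi r (p b + eps * q b) + phi r (p b - eps * q b) \<ge> 2 * phi r (p b) * (1 - c b)"
      unfolding c_def using phi_pair[OF r xV[OF b, folded p_def], of "eps * q b"] by simp
    show "0 \<le> 2 * phi r (p b)" by (simp add: phi_nonneg)
    show "0 \<le> c b" unfolding c_def by simp
    show "c b \<le> 1" unfolding c_def by simp
  qed simp
  have cb: "c b \<le> K1 * E" if b: "b \<in> Basis" for b
  proof -
    have "\<bar>q b\<bar> \<le> norm w" unfolding q_def using b by (rule Basis_le_norm)
    then have "(q b)^2 \<le> (norm w)^2" by (metis abs_ge_zero power2_abs power_mono)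
    then have h2: "(eps * q b)^2 \<le> eps^2 * (norm w)^2"
      by (simp add: power_mult_distrib mult_left_mono)
    have K1: "64/r^2 \<le> K1" "1 \<le> K1" unfolding K1_def by auto
    show ?thesis
    proof (cases "eps^2 * (norm w)^2 \<le> 1")
      case True
      then have "E = eps^2 * (norm w)^2" unfolding E_def by simp
      moreover have "64/r^2 * (eps * q b)^2 \<le> K1 * (eps^2 * (norm w)^2)"
        using h2 K1 by (intro mult_mono) auto
      ultimately show ?thesis unfolding c_def by simp
    next
      case False
      then have "E = 1" unfolding E_def by simp
      then show ?thesis unfolding c_def using K1 by simp
    qed
  qed
  have sc: "(\<Sum>b\<in>Basis. c b) \<le> DIM('a) * (K1 * E)"
    using sum_bounded_above[of Basis c "K1 * E"] cb by simp
  have P0: "(\<Prod>b\<in>Basis. 2 * phi r (p b)) \<ge> 0" by (intro prod_nonneg) (simp add: phi_nonneg)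
  have mono: "(\<Prod>b\<in>Basis. 2 * phi r (p b)) * (1 - (\<Sum>b\<in>Basis. c b)) \<ge> (\<Prod>b\<in>Basis. 2 * phi r (p b)) * (1 - DIM('a) * (K1 * E))"
    using sc P0 by (intro mult_left_mono) auto
  have Geq: "(\<Prod>b\<in>(Basis::'a set). 2 * phi r (p b)) = 2 ^ DIM('a) * (\<Prod>b\<in>Basis. phi r (p b))"
    by (simp add: prod.distrib)
  have last: "(\<Prod>b\<in>Basis. 2 * phi r (p b)) * (1 - DIM('a) * (K1 * E)) = 2 ^ DIM('a) * (\<Prod>b\<in>Basis. phi r (p b)) * (1 - DIM('a) * K1 * E)"
    by (simp only: Geq mult.assoc)
  have fin: "(\<Sum>\<sigma>\<in>sigmas. \<Prod>b\<in>Basis. phi r ((x - eps *\<^sub>R flip \<sigma> w - z) \<bullet> b))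
     \<ge> 2 ^ DIM('a) * (\<Prod>b\<in>Basis. phi r (p b)) * (1 - DIM('a) * K1 * E)"
    using eq low mono last by linarith
  then show ?thesis unfolding p_def K1_def E_def .
qed

lemma phi_le: "r \<ge> 0 \<Longrightarrow> phi r t \<le> r^4"
proof -
  assume r: "r \<ge> 0"
  have "max 0 (r^2 - t^2) \<le> r^2" by simp
  then have "(max 0 (r^2 - t^2))^2 \<le> (r^2)^2" by (intro power_mono) auto
  then show ?thesis by (simp add: phi_def power_mult[symmetric])
qed

lemma integrable_J_times:
  fixes J h :: "'a::euclidean_space \<Rightarrow> real"
  assumes J: "integrable lebesgue J" and Jn: "\<And>x. J x \<ge> 0" and h: "continuous_on UNIV h"
    and B: "\<And>w. \<bar>h w\<bar> \<le> B"
  shows "integrable lebesgue (\<lambda>w. J w * h w)"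
proof (rule Bochner_Integration.integrable_bound[where f="\<lambda>w. B * J w"])
  show "integrable lebesgue (\<lambda>w. B * J w)" using J by simp
  have "h \<in> borel_measurable lebesgue"
    using borel_measurable_continuous_onI[OF h] by (intro measurable_completion) simp
  then show "(\<lambda>w. J w * h w) \<in> borel_measurable lebesgue"
    using borel_measurable_integrable[OF J] by (intro borel_measurable_times)
  show "AE w in lebesgue. norm (J w * h w) \<le> norm (B * J w)"
  proof (rule AE_I2)
    fix w
    have "B \<ge> 0" using B[of w] by simp
    have "norm (J w * h w) = J w * \<bar>h w\<bar>" using Jn[of w] by (simp add: abs_mult)
    also have "\<dots> \<le> J w * B" using Jn[of w] B[of w] by (intro mult_left_mono) auto
    also have "\<dots> = norm (B * J w)" using Jn[of w] \<open>B \<ge> 0\<close> by (simp add: abs_mult)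
    finally show "norm (J w * h w) \<le> norm (B * J w)" .
  qed
qed

lemma continuous_flip: "continuous_on UNIV (flip \<sigma> :: 'a::euclidean_space \<Rightarrow> 'a)"
  unfolding flip_def by (intro continuous_intros)

lemma conv_lower:
  fixes J :: "'a::euclidean_space \<Rightarrow> real" and z x :: 'a
  assumes J_int: "integrable lebesgue J" and Jn: "\<And>x. J x \<ge> 0"
    and J_radial: "\<And>x y. norm x = norm y \<Longrightarrow> J x = J y"
    and J_mass: "(\<integral>x. J x \<partial>lebesgue) = 1"
    and r: "r > 0" and k: "k \<ge> 0" and eps: "eps > 0"
    and xV: "\<And>b. b \<in> Basis \<Longrightarrow> \<bar>(x - z) \<bullet> b\<bar> < r"
    and u_def: "u = (\<lambda>y. k * (\<Prod>b\<in>Basis. phi r ((y - z) \<bullet> b)))"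
  shows "conv (rescale_kernel J eps) u x \<ge>
           u x * (1 - DIM('a) * max (64/r^2) 1 * (\<integral>w. J w * min (eps^2 * (norm w)^2) 1 \<partial>lebesgue))"
proof -
  define N where "N = DIM('a)"
  define K1 where "K1 = max (64/r^2) (1::real)"
  define H where "H = (\<integral>w. J w * min (eps^2 * (norm w)^2) 1 \<partial>lebesgue)"
  define B where "B = k * (r^4)^DIM('a)"
  have Jm: "J \<in> borel_measurable lebesgue" using J_int by (rule borel_measurable_integrable)
  have ucont: "continuous_on UNIV u"
    unfolding u_def phi_def by (intro continuous_intros)
  have um: "u \<in> borel_measurable lebesgue"
    using borel_measurable_continuous_onI[OF ucont] by (intro measurable_completion) simp
  have ub: "\<bar>u y\<bar> \<le> B" for y
  proof -
    have "0 \<le> (\<Prod>b\<in>Basis. phi r ((y - z) \<bullet> b))" by (intro prod_nonneg) (simp add: phi_nonneg)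
    moreover have "(\<Prod>b\<in>Basis. phi r ((y - z) \<bullet> b)) \<le> (\<Prod>b\<in>(Basis::'a set). r^4)"
      using r by (intro prod_mono) (simp add: phi_nonneg phi_le)
    ultimately show ?thesis unfolding u_def B_def using k by (simp add: abs_mult mult_left_mono)
  qed
  define I where "I = (\<integral>w. J w * u (x - eps *\<^sub>R w) \<partial>lebesgue)"
  have convI: "conv (rescale_kernel J eps) u x = I"
    unfolding I_def by (rule conv_rescale[OF Jm um eps])
  define g where "g \<sigma> w = J w * u (x - eps *\<^sub>R flip \<sigma> w)" for \<sigma> w
  have gint: "integrable lebesgue (g \<sigma>)" for \<sigma>
    unfolding g_def
  proof (rule integrable_J_times[OF J_int Jn _ ub])
    show "continuous_on UNIV (\<lambda>w. u (x - eps *\<^sub>R flip \<sigma> w))"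
      by (intro continuous_on_compose2[OF ucont] continuous_intros continuous_flip) auto
  qed
  have Ig: "I = (\<integral>w. g \<sigma> w \<partial>lebesgue)" if s: "\<sigma> \<in> sigmas" for \<sigma>
  proof -
    have g0m: "(\<lambda>w. J w * u (x - eps *\<^sub>R w)) \<in> borel_measurable lebesgue"
    proof -
      have "continuous_on UNIV (\<lambda>w. u (x - eps *\<^sub>R w))"
        by (intro continuous_on_compose2[OF ucont] continuous_intros) auto
      then have "(\<lambda>w. u (x - eps *\<^sub>R w)) \<in> borel_measurable lebesgue"
        using borel_measurable_continuous_onI by (intro measurable_completion) auto
      then show ?thesis using Jm by (intro borel_measurable_times)
    qed
    have "I = (\<integral>w. J (flip \<sigma> w) * u (x - eps *\<^sub>R flip \<sigma> w) \<partial>lebesgue)"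
      unfolding I_def by (rule integral_flip[OF sigmas_abs[OF s] g0m])
    also have "\<dots> = (\<integral>w. g \<sigma> w \<partial>lebesgue)"
    proof -
      have "J (flip \<sigma> w) = J w" for w by (rule J_radial[OF norm_flip[OF sigmas_abs[OF s]]])
      then show ?thesis unfolding g_def by simp
    qed
    finally show ?thesis .
  qed
  have "2 ^ N * I = (\<Sum>\<sigma>\<in>(sigmas::('a \<Rightarrow> real) set). I)" unfolding N_def by (simp add: sigmas_card)
  also have "\<dots> = (\<Sum>\<sigma>\<in>sigmas. \<integral>w. g \<sigma> w \<partial>lebesgue)" using Ig by simp
  also have "\<dots> = (\<integral>w. (\<Sum>\<sigma>\<in>sigmas. g \<sigma> w) \<partial>lebesgue)"
    by (rule Bochner_Integration.integral_sum[symmetric]) (rule gint)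
  also have "\<dots> \<ge> (\<integral>w. J w * (2 ^ N * u x * (1 - N * K1 * min (eps^2 * (norm w)^2) 1)) \<partial>lebesgue)"
  proof (rule Bochner_Integration.integral_mono)
    show "integrable lebesgue (\<lambda>w. \<Sum>\<sigma>\<in>sigmas. g \<sigma> w)" using gint by (rule Bochner_Integration.integrable_sum)
    show "integrable lebesgue (\<lambda>w. J w * (2 ^ N * u x * (1 - N * K1 * min (eps^2 * (norm w)^2) 1)))"
    proof (rule integrable_J_times[OF J_int Jn])
      show "continuous_on UNIV (\<lambda>w::'a. 2 ^ N * u x * (1 - N * K1 * min (eps^2 * (norm w)^2) 1))"
        by (intro continuous_intros)
      fix w :: 'a
      have "0 \<le> min (eps^2 * (norm w)^2) 1" by simp
      moreover have "min (eps^2 * (norm w)^2) 1 \<le> 1" by simp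
      moreover have K1: "K1 \<ge> 1" unfolding K1_def by simp
      ultimately have "\<bar>1 - N * K1 * min (eps^2 * (norm w)^2) 1\<bar> \<le> 1 + N * K1"
        by (smt (verit, best) mult_left_le mult_nonneg_nonneg of_nat_0_le_iff)
      then show "\<bar>2 ^ N * u x * (1 - N * K1 * min (eps^2 * (norm w)^2) 1)\<bar> \<le> \<bar>2 ^ N * u x\<bar> * (1 + N * K1)"
        by (simp add: abs_mult mult_left_mono)
    qed
    fix w :: 'a
    have "(\<Sum>\<sigma>\<in>sigmas. g \<sigma> w) = J w * (k * (\<Sum>\<sigma>\<in>sigmas. \<Prod>b\<in>Basis. phi r ((x - eps *\<^sub>R flip \<sigma> w - z) \<bullet> b)))"
      unfolding g_def u_def by (simp add: sum_distrib_left)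
    also have "\<dots> \<ge> J w * (k * (2 ^ DIM('a) * (\<Prod>b\<in>Basis. phi r ((x - z) \<bullet> b)) * (1 - DIM('a) * max (64/r^2) 1 * min (eps^2 * (norm w)^2) 1)))"
      using sum_flips_lower[OF r xV, of eps w] Jn[of w] k by (intro mult_left_mono) auto
    also have "J w * (k * (2 ^ DIM('a) * (\<Prod>b\<in>Basis. phi r ((x - z) \<bullet> b)) * (1 - DIM('a) * max (64/r^2) 1 * min (eps^2 * (norm w)^2) 1)))
       = J w * (2 ^ N * u x * (1 - N * K1 * min (eps^2 * (norm w)^2) 1))"
      unfolding u_def N_def K1_def by (simp add: algebra_simps)
    finally show "J w * (2 ^ N * u x * (1 - N * K1 * min (eps^2 * (norm w)^2) 1)) \<le> (\<Sum>\<sigma>\<in>sigmas. g \<sigma> w)" .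
  qed
  also have "(\<integral>w. J w * (2 ^ N * u x * (1 - N * K1 * min (eps^2 * (norm w)^2) 1)) \<partial>lebesgue)
      = 2 ^ N * u x * (1 - N * K1 * H)"
  proof -
    have i2: "integrable lebesgue (\<lambda>w. J w * min (eps^2 * (norm w)^2) 1)"
      by (rule integrable_J_times[OF J_int Jn, where B=1]) (auto intro!: continuous_intros)
    have "(\<lambda>w. J w * (2 ^ N * u x * (1 - N * K1 * min (eps^2 * (norm w)^2) 1)))
        = (\<lambda>w. (2 ^ N * u x) * J w - (2 ^ N * u x * N * K1) * (J w * min (eps^2 * (norm w)^2) 1))"
      by (simp add: fun_eq_iff algebra_simps)
    then have "(\<integral>w. J w * (2 ^ N * u x * (1 - N * K1 * min (eps^2 * (norm w)^2) 1)) \<partial>lebesgue)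
      = (2 ^ N * u x) * (\<integral>w. J w \<partial>lebesgue) - (2 ^ N * u x * N * K1) * H"
      unfolding H_def using J_int i2 by simp
    then show ?thesis using J_mass by (simp add: algebra_simps)
  qed
  finally have "2 ^ N * I \<ge> 2 ^ N * (u x * (1 - N * K1 * H))" by (simp add: algebra_simps)
  then have "I \<ge> u x * (1 - N * K1 * H)" by simp
  then show ?thesis unfolding convI N_def K1_def H_def .
qed

lemma phi_nz_iff: "r > 0 \<Longrightarrow> (phi r t \<noteq> 0) = (\<bar>t\<bar> < r)"
proof
  assume r: "r > 0" and "phi r t \<noteq> 0"
  then show "\<bar>t\<bar> < r" using phi_outside[of r t] by force
next
  assume r: "r > 0" and t: "\<bar>t\<bar> < r"
  then have "\<bar>t\<bar>^2 < r^2" by (intro power_strict_mono) auto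
  then have "t^2 < r^2" by simp
  then show "phi r t \<noteq> 0" using phi_inside[OF t] by simp
qed

theorem lemma3p1:
  fixes a J :: "'a::euclidean_space \<Rightarrow> real" and m :: real
  assumes m: "0 \<le> m" "m < 2"
    and a_cont: "continuous_on UNIV a"
    and a_bdd: "bounded (range a)"
    and a_pos: "\<exists>x. pos_part a x \<noteq> 0"
    and a_limsup: "Limsup at_infinity (\<lambda>x. ereal (a x)) < 0"
    and J_int: "integrable lebesgue J"
    and J_nonneg: "\<And>x. J x \<ge> 0"
    and J_radial: "\<And>x y. norm x = norm y \<Longrightarrow> J x = J y"
    and J_mass: "(\<integral>x. J x \<partial>lebesgue) = 1"
    and J_moment: "integrable lebesgue (\<lambda>x. J x * norm x powr m)"
  shows "\<forall>\<theta>. 0 < \<theta> \<and> \<theta> < 1 \<longrightarrow> (\<forall>z \<in> supp (pos_part a).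
           \<exists>V eps0 u. z \<in> interior V \<and> V \<subseteq> supp (pos_part a) \<and> eps0 > 0 \<and>
             Cc u \<and> (\<forall>x. u x \<ge> 0) \<and>
             supp u = V \<and>
             u z \<ge> (1 - \<theta>) * pos_part a z \<and>
             (\<forall>x\<in>V. u x < pos_part a x) \<and>
             (\<forall>eps. 0 < eps \<and> eps < eps0 \<longrightarrow>
                (\<forall>x. (1 / eps powr m) * (conv (rescale_kernel J eps) u x - u x)
                      + u x * (a x - u x) \<ge> 0)))"
proof (intro allI impI ballI)
  fix \<theta> :: real and z :: 'a
  assume th: "0 < \<theta> \<and> \<theta> < 1" and z: "z \<in> supp (pos_part a)"
  define A where "A = a z"
  have A: "A > 0" using z unfolding A_def supp_def pos_part_def by (auto simp: max_def split: if_splits)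
  define \<delta> where "\<delta> = \<theta> * A / 2"
  have \<delta>: "\<delta> > 0" unfolding \<delta>_def using th A by simp
  obtain \<rho> where \<rho>: "\<rho> > 0" and \<rho>a: "\<And>y. dist y z < \<rho> \<Longrightarrow> dist (a y) (a z) < \<delta>"
    using a_cont \<delta> unfolding continuous_on_iff by (metis UNIV_I)
  define N where "N = real DIM('a)"
  have N: "N \<ge> 1" unfolding N_def using DIM_positive[where 'a='a] by linarith
  define r where "r = \<rho> / (2 * N)"
  have r: "r > 0" unfolding r_def using \<rho> N by simp
  define k where "k = (1 - \<theta>) * A / (r^4)^DIM('a)"
  have k: "k > 0" unfolding k_def using th A r by simp
  define u where "u = (\<lambda>y. k * (\<Prod>b\<in>Basis. phi r ((y - z) \<bullet> b)))"
  define V where "V = {y. \<forall>b\<in>Basis. \<bar>(y - z) \<bullet> b\<bar> < r}"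
  define K1 where "K1 = max (64/r^2) (1::real)"
  have K1: "K1 \<ge> 1" unfolding K1_def by simp
  have Jm: "J \<in> borel_measurable lebesgue" using J_int by (rule borel_measurable_integrable)
  obtain e0 where e0: "e0 > 0" and e0H: "\<And>eps. 0 < eps \<Longrightarrow> eps < e0 \<Longrightarrow>
      (\<integral>w. J w * min (eps^2 * (norm w)^2) 1 \<partial>lebesgue) \<le> (\<delta> / (N * K1)) * eps powr m"
    using small_moment[OF m Jm J_nonneg J_moment, of "\<delta> / (N * K1)"] \<delta> N K1 by auto
  have ucont: "continuous_on UNIV u" unfolding u_def phi_def by (intro continuous_intros)
  have unn: "u y \<ge> 0" for y unfolding u_def using k by (intro mult_nonneg_nonneg prod_nonneg) (auto simp: phi_nonneg)
  have ule: "u y \<le> (1 - \<theta>) * A" for y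
  proof -
    have "(\<Prod>b\<in>Basis. phi r ((y - z) \<bullet> b)) \<le> (\<Prod>b\<in>(Basis::'a set). r^4)"
      using r by (intro prod_mono) (simp add: phi_nonneg phi_le)
    then have "u y \<le> k * (r^4)^DIM('a)" unfolding u_def using k by (simp add: mult_left_mono)
    also have "\<dots> = (1 - \<theta>) * A" unfolding k_def using r by simp
    finally show ?thesis .
  qed
  have uz: "u z = (1 - \<theta>) * A"
  proof -
    have p0: "phi r ((z - z) \<bullet> b) = r^4" for b :: 'a
    proof -
      have "max 0 (r^2) = r^2" by simp
      then have "phi r ((z - z) \<bullet> b) = (r^2)^2" by (simp add: phi_def)
      also have "\<dots> = r^4" by (simp flip: power_mult)
      finally show ?thesis .
    qed
    have "u z = k * (r^4)^DIM('a)" unfolding u_def by (simp only: p0 prod_constant)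
    also have "\<dots> = (1 - \<theta>) * A" unfolding k_def using r by simp
    finally show ?thesis .
  qed
  have suppu: "supp u = V"
  proof -
    have "u y \<noteq> 0 \<longleftrightarrow> y \<in> V" for y
    proof -
      have "u y \<noteq> 0 \<longleftrightarrow> (\<forall>b\<in>Basis. phi r ((y - z) \<bullet> b) \<noteq> 0)"
        unfolding u_def using k by (simp add: prod_zero_iff)
      also have "\<dots> \<longleftrightarrow> y \<in> V" unfolding V_def using phi_nz_iff[OF r] by simp
      finally show ?thesis .
    qed
    then show ?thesis unfolding supp_def by auto
  qed
  have aV: "a y > A - \<delta>" if y: "y \<in> V" for y
  proof -
    have "norm (y - z) \<le> (\<Sum>b\<in>Basis. \<bar>(y - z) \<bullet> b\<bar>)" by (rule norm_le_l1)
    also have "\<dots> < (\<Sum>b\<in>(Basis::'a set). r)"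
      using y unfolding V_def by (intro sum_strict_mono) auto
    also have "\<dots> = N * r" unfolding N_def by simp
    also have "\<dots> = \<rho> / 2" unfolding r_def using N by simp
    finally have "dist y z < \<rho>" using \<rho> by (simp add: dist_norm)
    then have "dist (a y) (a z) < \<delta>" by (rule \<rho>a)
    then show ?thesis unfolding A_def dist_real_def by linarith
  qed
  have Vb: "bounded V"
  proof -
    have "V \<subseteq> cball z (N * r)"
    proof
      fix y assume y: "y \<in> V"
      have "norm (y - z) \<le> (\<Sum>b\<in>Basis. \<bar>(y - z) \<bullet> b\<bar>)" by (rule norm_le_l1)
      also have "\<dots> \<le> (\<Sum>b\<in>(Basis::'a set). r)"
        using y unfolding V_def by (intro sum_mono) (auto intro: less_imp_le)
      also have "\<dots> = N * r" unfolding N_def by simp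
      finally show "y \<in> cball z (N * r)" by (simp add: dist_norm norm_minus_commute)
    qed
    then show ?thesis using bounded_cball bounded_subset by blast
  qed
  have Vopen: "open V"
  proof -
    have "open {y. u y \<noteq> 0}" using ucont by (intro open_Collect_neq continuous_intros) auto
    then show ?thesis using suppu unfolding supp_def by simp
  qed
  have zV: "z \<in> V" using suppu uz th A unfolding supp_def by auto
  show "\<exists>V eps0 u. z \<in> interior V \<and> V \<subseteq> supp (pos_part a) \<and> eps0 > 0 \<and>
             Cc u \<and> (\<forall>x. u x \<ge> 0) \<and>
             supp u = V \<and>
             u z \<ge> (1 - \<theta>) * pos_part a z \<and>
             (\<forall>x\<in>V. u x < pos_part a x) \<and>
             (\<forall>eps. 0 < eps \<and> eps < eps0 \<longrightarrow>
                (\<forall>x. (1 / eps powr m) * (conv (rescale_kernel J eps) u x - u x)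
                      + u x * (a x - u x) \<ge> 0))"
  proof (intro exI[of _ V] exI[of _ e0] exI[of _ u] conjI allI impI ballI)
    show "z \<in> interior V" using zV Vopen by (simp add: interior_open)
    show "V \<subseteq> supp (pos_part a)"
    proof
      fix y assume "y \<in> V"
      have h: "A * \<theta> < A * 2" using th A by (intro mult_strict_left_mono) auto
      then have "a y > 0" using aV[of y] \<open>y \<in> V\<close> unfolding \<delta>_def by (simp add: mult.commute)
      then show "y \<in> supp (pos_part a)" unfolding supp_def pos_part_def by simp
    qed
    show "e0 > 0" by (rule e0)
    show "Cc u" unfolding Cc_def using ucont Vb suppu by (simp add: compact_closure)
    show "u x \<ge> 0" for x by (rule unn)
    show "supp u = V" by (rule suppu)
    show "u z \<ge> (1 - \<theta>) * pos_part a z" using uz A unfolding pos_part_def A_def by simp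
    show "u y < pos_part a y" if "y \<in> V" for y
    proof -
      have "u y \<le> (1 - \<theta>) * A" by (rule ule)
      also have "\<dots> < A - \<delta>" unfolding \<delta>_def using th A by (simp add: algebra_simps)
      also have "\<dots> < a y" by (rule aV[OF that])
      also have "a y \<le> pos_part a y" unfolding pos_part_def by simp
      finally show ?thesis .
    qed
    fix eps :: real and x :: 'a
    assume eps: "0 < eps \<and> eps < e0"
    show "(1 / eps powr m) * (conv (rescale_kernel J eps) u x - u x) + u x * (a x - u x) \<ge> 0"
    proof (cases "x \<in> V")
      case True
      define H where "H = (\<integral>w. J w * min (eps^2 * (norm w)^2) 1 \<partial>lebesgue)"
      define C where "C = conv (rescale_kernel J eps) u x"
      define P where "P = eps powr m"
      have P: "P > 0" unfolding P_def using eps by simp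
      have xV: "\<And>b. b \<in> Basis \<Longrightarrow> \<bar>(x - z) \<bullet> b\<bar> < r" using True unfolding V_def by auto
      have c1: "C \<ge> u x * (1 - N * K1 * H)"
        using conv_lower[OF J_int J_nonneg J_radial J_mass r less_imp_le[OF k] _ xV u_def, of eps] eps
        unfolding N_def K1_def H_def C_def by simp
      have hH: "H \<le> \<delta> / (N * K1) * P" unfolding H_def P_def using e0H eps by simp
      have NK: "N * K1 > 0" using N K1 by simp
      have "N * K1 * H \<le> N * K1 * (\<delta> / (N * K1) * P)" using hH NK by (intro mult_left_mono) auto
      also have "\<dots> = \<delta> * P" using N K1 by simp
      finally have h2: "N * K1 * H \<le> \<delta> * P" .
      have "u x * (N * K1 * H) \<le> u x * (\<delta> * P)" using h2 unn[of x] by (intro mult_left_mono) auto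
      then have d1: "C - u x \<ge> - (u x * \<delta> * P)" using c1 by (simp add: algebra_simps)
      have "(1 / P) * (C - u x) \<ge> (1 / P) * (- (u x * \<delta> * P))"
        using d1 P by (intro mult_left_mono) auto
      also have "(1 / P) * (- (u x * \<delta> * P)) = - (u x * \<delta>)" using P by simp
      finally have t1: "(1 / P) * (C - u x) \<ge> - (u x * \<delta>)" .
      have "a x - u x \<ge> \<delta>"
        using aV[OF True] ule[of x] unfolding \<delta>_def by (simp add: algebra_simps)
      then have t2: "u x * (a x - u x) \<ge> u x * \<delta>" using unn[of x] by (intro mult_left_mono) auto
      show ?thesis using t1 t2 unfolding C_def P_def by linarith
    next
      case False
      then have ux: "u x = 0" using suppu unfolding supp_def by auto
      have "conv (rescale_kernel J eps) u x \<ge> 0"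
        unfolding conv_def rescale_kernel_def
        using eps J_nonneg unn by (intro integral_nonneg_AE AE_I2 mult_nonneg_nonneg) auto
      then show ?thesis using ux eps by simp
    qed
  qed
qed

end
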